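(* Let $(TN,\mu)$ be a $T$-system. For a transition $t$ of $TN$ and a pre-place $q\in{}^\bullet t$ with $\mu(q)=0$ let $$en(TN,\mu)_q:=\{(\tau,\delta):\ \tau\in en(TN,\mu),\ \delta=(\tau,\dots,q,t)\subset TN \text{ an elementary path}\}.$$ (1) Let $t$ be a transition of $TN$ which is enabled at some marking reachable from $\mu$. Then for each pre-place $q\in{}^\bullet t$ with $\mu(q)=0$ there is a pair $(\tau,\delta)\in en(TN,\mu)_q$ with $\Vert\mu\Vert_\delta=0$. (2) Assume moreover that $(TN,\mu)$ is perpetual with regeneration cluster $cl$, and let $t_{cl}$ be the unique transition of $cl$. (i) For each transition $t$ of $TN$ having a pre-place $p\in{}^\bullet t$ with $\mu(p)=1$, and for each pre-place $q\in{}^\bullet t$ with $\mu(q)=0$, there is a pair $(\tau,\delta)\in en(TN,\mu)_q$ with $\Vert\mu\Vert_\delta=0$ and $t_{cl}\notin\delta_{seg}$, where $\delta_{seg}:=(\tau,\dots,q)$ is the segment of $\delta$ ending at $q$. (ii) Each elementary path $\delta\subset TN$ with $t_{cl}\notin\delta$ satisfies $\Vert\mu\Vert_\delta\le 1$.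
   Context: A net $N=(P,T,F)$: finite disjoint sets of places and transitions and edges $F\subset(P\times T)\cup(T\times P)$; nets are weakly connected. ${}^\bullet x$, $x^\bullet$ are pre-set and post-set. A $T$-net is a net in which every place has exactly one pre-transition and exactly one post-transition; a $T$-system is a pair $(TN,\mu)$ with $TN$ a $T$-net and $\mu$ a marking (a map from places to $\mathbb{N}$). A transition $t$ is enabled at $\mu$ if all places of ${}^\bullet t$ carry a token; firing removes one token from each pre-place and adds one to each post-place. $en(TN,\mu)$ is the set of transitions enabled at $\mu$; reachable markings are those obtained by firing finite sequences of successively enabled transitions. A path is a nonempty sequence of nodes $(x_1,\dots,x_n)$ with $(x_i,x_{i+1})\in F$; it is elementary if its nodes are pairwise distinct. For a set of nodes $X$ (e.g. the nodes of a path), $\Vert\mu\Vert_X=\sum_{p\in X\text{ place}}\mu(p)$. The cluster of a node $x$ is the smallest subnet containing $x$ containing $p^\bullet$ for each of its places $p$ and ${}^\bullet t$ for each of its transitions $t$; $\mu_{cl}$ is the marking equal to $1$ on the places of $cl$ and $0$ elsewhere. A Petri net $(N,\mu)$ is perpetual with regeneration cluster $cl$ if it is live and bounded and $\mu_{cl}$ is a home marking (reachable from every reachable marking). *)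

theory Defs
  imports Main
begin

definition net :: "'n set \<Rightarrow> 'n set \<Rightarrow> ('n \<times> 'n) set \<Rightarrow> bool" where
  "net P T F \<longleftrightarrow> finite P \<and> finite T \<and> P \<inter> T = {} \<and>
     F \<subseteq> (P \<times> T) \<union> (T \<times> P) \<and>
     (\<forall>x \<in> P \<union> T. \<forall>y \<in> P \<union> T. (x, y) \<in> (F \<union> F\<inverse>)\<^sup>*)"

definition preset :: "('n \<times> 'n) set \<Rightarrow> 'n \<Rightarrow> 'n set" where
  "preset F x = {y. (y, x) \<in> F}"

definition postset :: "('n \<times> 'n) set \<Rightarrow> 'n \<Rightarrow> 'n set" where
  "postset F x = {y. (x, y) \<in> F}"

definition tnet :: "'n set \<Rightarrow> 'n set \<Rightarrow> ('n \<times> 'n) set \<Rightarrow> bool" where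
  "tnet P T F \<longleftrightarrow> net P T F \<and>
     (\<forall>p \<in> P. card (preset F p) = 1 \<and> card (postset F p) = 1)"

definition marking :: "'n set \<Rightarrow> ('n \<Rightarrow> nat) \<Rightarrow> bool" where
  "marking P \<mu> \<longleftrightarrow> (\<forall>x. x \<notin> P \<longrightarrow> \<mu> x = 0)"

definition tsystem :: "'n set \<Rightarrow> 'n set \<Rightarrow> ('n \<times> 'n) set \<Rightarrow> ('n \<Rightarrow> nat) \<Rightarrow> bool" where
  "tsystem P T F \<mu> \<longleftrightarrow> tnet P T F \<and> marking P \<mu>"

definition enabled :: "'n set \<Rightarrow> ('n \<times> 'n) set \<Rightarrow> ('n \<Rightarrow> nat) \<Rightarrow> 'n \<Rightarrow> bool" where
  "enabled T F \<mu> t \<longleftrightarrow> t \<in> T \<and> (\<forall>p \<in> preset F t. \<mu> p \<ge> 1)"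

definition en :: "'n set \<Rightarrow> ('n \<times> 'n) set \<Rightarrow> ('n \<Rightarrow> nat) \<Rightarrow> 'n set" where
  "en T F \<mu> = {t. enabled T F \<mu> t}"

definition fire :: "('n \<times> 'n) set \<Rightarrow> ('n \<Rightarrow> nat) \<Rightarrow> 'n \<Rightarrow> ('n \<Rightarrow> nat)" where
  "fire F \<mu> t = (\<lambda>p. \<mu> p - (if (p, t) \<in> F then 1 else 0) + (if (t, p) \<in> F then 1 else 0))"

definition step :: "'n set \<Rightarrow> ('n \<times> 'n) set \<Rightarrow> ('n \<Rightarrow> nat) \<Rightarrow> ('n \<Rightarrow> nat) \<Rightarrow> bool" where
  "step T F \<mu> \<mu>' \<longleftrightarrow> (\<exists>t. enabled T F \<mu> t \<and> \<mu>' = fire F \<mu> t)"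

definition reach :: "'n set \<Rightarrow> ('n \<times> 'n) set \<Rightarrow> ('n \<Rightarrow> nat) \<Rightarrow> ('n \<Rightarrow> nat) \<Rightarrow> bool" where
  "reach T F = (step T F)\<^sup>*\<^sup>*"

definition live :: "'n set \<Rightarrow> ('n \<times> 'n) set \<Rightarrow> ('n \<Rightarrow> nat) \<Rightarrow> bool" where
  "live T F \<mu> \<longleftrightarrow> (\<forall>t \<in> T. \<forall>\<mu>'. reach T F \<mu> \<mu>' \<longrightarrow>
       (\<exists>\<mu>''. reach T F \<mu>' \<mu>'' \<and> enabled T F \<mu>'' t))"

definition bounded :: "'n set \<Rightarrow> 'n set \<Rightarrow> ('n \<times> 'n) set \<Rightarrow> ('n \<Rightarrow> nat) \<Rightarrow> bool" where
  "bounded P T F \<mu> \<longleftrightarrow> (\<exists>k. \<forall>\<mu>'. reach T F \<mu> \<mu>' \<longrightarrow> (\<forall>p \<in> P. \<mu>' p \<le> k))"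

definition home_marking :: "'n set \<Rightarrow> ('n \<times> 'n) set \<Rightarrow> ('n \<Rightarrow> nat) \<Rightarrow> ('n \<Rightarrow> nat) \<Rightarrow> bool" where
  "home_marking T F \<mu> \<nu> \<longleftrightarrow> (\<forall>\<mu>'. reach T F \<mu> \<mu>' \<longrightarrow> reach T F \<mu>' \<nu>)"

inductive_set cluster :: "'n set \<Rightarrow> 'n set \<Rightarrow> ('n \<times> 'n) set \<Rightarrow> 'n \<Rightarrow> 'n set"
  for P T F x where
  base: "x \<in> cluster P T F x"
| post: "p \<in> cluster P T F x \<Longrightarrow> p \<in> P \<Longrightarrow> (p, t) \<in> F \<Longrightarrow> t \<in> cluster P T F x"
| pre: "t \<in> cluster P T F x \<Longrightarrow> t \<in> T \<Longrightarrow> (p, t) \<in> F \<Longrightarrow> p \<in> cluster P T F x"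

definition is_cluster :: "'n set \<Rightarrow> 'n set \<Rightarrow> ('n \<times> 'n) set \<Rightarrow> 'n set \<Rightarrow> bool" where
  "is_cluster P T F cl \<longleftrightarrow> (\<exists>x \<in> P \<union> T. cl = cluster P T F x)"

definition mu_cl :: "'n set \<Rightarrow> 'n set \<Rightarrow> 'n \<Rightarrow> nat" where
  "mu_cl P cl = (\<lambda>x. if x \<in> P \<and> x \<in> cl then 1 else 0)"

definition perpetual :: "'n set \<Rightarrow> 'n set \<Rightarrow> ('n \<times> 'n) set \<Rightarrow> ('n \<Rightarrow> nat) \<Rightarrow> 'n set \<Rightarrow> bool" where
  "perpetual P T F \<mu> cl \<longleftrightarrow> is_cluster P T F cl \<and> live T F \<mu> \<and> bounded P T F \<mu> \<and>
      home_marking T F \<mu> (mu_cl P cl)"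

definition is_path :: "('n \<times> 'n) set \<Rightarrow> 'n list \<Rightarrow> bool" where
  "is_path F xs \<longleftrightarrow> xs \<noteq> [] \<and> (\<forall>i. Suc i < length xs \<longrightarrow> (xs ! i, xs ! Suc i) \<in> F)"

definition elem_path :: "('n \<times> 'n) set \<Rightarrow> 'n list \<Rightarrow> bool" where
  "elem_path F xs \<longleftrightarrow> is_path F xs \<and> distinct xs"

definition mnorm :: "'n set \<Rightarrow> ('n \<Rightarrow> nat) \<Rightarrow> 'n list \<Rightarrow> nat" where
  "mnorm P \<mu> xs = (\<Sum>p \<in> set xs \<inter> P. \<mu> p)"

definition en_q :: "'n set \<Rightarrow> ('n \<times> 'n) set \<Rightarrow> ('n \<Rightarrow> nat) \<Rightarrow> 'n \<Rightarrow> 'n \<Rightarrow> ('n \<times> 'n list) set" where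
  "en_q T F \<mu> q t = {(\<tau>, \<delta>). \<tau> \<in> en T F \<mu> \<and> elem_path F \<delta> \<and>
      length \<delta> \<ge> 2 \<and> hd \<delta> = \<tau> \<and> last \<delta> = t \<and> \<delta> ! (length \<delta> - 2) = q}"

end

theory Submission
  imports Defs
begin

abbreviation "rel F \<equiv> (\<lambda>x y. (x, y) \<in> F)"

lemma is_path_succ: "is_path F xs \<longleftrightarrow> xs \<noteq> [] \<and> successively (rel F) xs"
  unfolding is_path_def successively_conv_nth by auto

lemma elem_path_from_rtrancl:
  assumes "(x, y) \<in> R\<^sup>*"
  shows "\<exists>xs. is_path R xs \<and> distinct xs \<and> hd xs = x \<and> last xs = y"
  using assms
proof (induction rule: converse_rtrancl_induct)
  case base
  then show ?case by (intro exI[of _ "[y]"]) (simp add: is_path_succ)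
next
  case (step x z)
  then obtain ys where ys: "is_path R ys" "distinct ys" "hd ys = z" "last ys = y" by blast
  show ?case
  proof (cases "x \<in> set ys")
    case False
    then show ?thesis using ys step(1)
      by (intro exI[of _ "x # ys"]) (auto simp: is_path_succ successively_Cons)
  next
    case True
    then obtain a b where ab: "ys = a @ x # b" by (meson split_list)
    have "successively (rel R) (x # b)" using ys(1) ab
      by (simp add: is_path_succ successively_append_iff)
    moreover have "last (x # b) = y" using ys(4) ab by simp
    ultimately show ?thesis using ys(2) ab
      by (intro exI[of _ "x # b"]) (auto simp: is_path_succ)
  qed
qed

lemma crossing:
  assumes "(x, y) \<in> R\<^sup>*" "x \<in> U" "y \<notin> U"
  shows "\<exists>a b. (a, b) \<in> R \<and> a \<in> U \<and> b \<notin> U"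
  using assms by (induction rule: rtrancl_induct) auto

definition cw :: "('n \<times> 'n) set \<Rightarrow> 'n list \<Rightarrow> bool" where
  "cw F w \<longleftrightarrow> w \<noteq> [] \<and> (\<forall>k<length w. (w ! k, w ! (Suc k mod length w)) \<in> F)"

lemma cwI:
  assumes "w \<noteq> []" "successively (rel F) w" "(last w, hd w) \<in> F"
  shows "cw F w"
  unfolding cw_def
proof (intro conjI allI impI)
  fix k assume k: "k < length w"
  show "(w ! k, w ! (Suc k mod length w)) \<in> F"
  proof (cases "Suc k < length w")
    case True
    then show ?thesis using assms(2) successively_nth[OF assms(2) True] by simp
  next
    case False
    then have "Suc k = length w" using k by simp
    then have "k = length w - 1" "Suc k mod length w = 0" by auto
    then show ?thesis using assms(1,3) by (simp add: last_conv_nth hd_conv_nth)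
  qed
qed (use assms in auto)

lemma sum_shift: "(\<Sum>k<n. g (Suc k mod n)) = (\<Sum>k<n. (g k :: nat))"
proof (cases n)
  case (Suc m)
  have "(\<Sum>k<Suc m. g (Suc k mod Suc m)) = (\<Sum>k<m. g (Suc k mod Suc m)) + g 0"
    by (simp add: sum.lessThan_Suc)
  also have "(\<Sum>k<m. g (Suc k mod Suc m)) = (\<Sum>k<m. g (Suc k))"
    by (intro sum.cong) auto
  also have "\<dots> + g 0 = (\<Sum>k<Suc m. g k)"
    by (subst sum.lessThan_Suc_shift) simp
  finally show ?thesis using Suc by simp
qed simp

lemma tnetD:
  assumes "tnet P T F"
  shows "finite P" "finite T" "P \<inter> T = {}" "F \<subseteq> (P \<times> T) \<union> (T \<times> P)"
    "\<forall>x \<in> P \<union> T. \<forall>y \<in> P \<union> T. (x, y) \<in> (F \<union> F\<inverse>)\<^sup>*"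
    "\<And>p. p \<in> P \<Longrightarrow> card (preset F p) = 1" "\<And>p. p \<in> P \<Longrightarrow> card (postset F p) = 1"
  using assms unfolding tnet_def net_def by auto

lemma post_unique:
  assumes "tnet P T F" "p \<in> P" "(p, a) \<in> F" "(p, b) \<in> F" shows "a = b"
proof -
  obtain z where "postset F p = {z}" using tnetD(7)[OF assms(1,2)] by (auto simp: card_1_singleton_iff)
  then show ?thesis using assms(3,4) unfolding postset_def by (metis mem_Collect_eq singletonD)
qed

lemma pre_unique:
  assumes "tnet P T F" "p \<in> P" "(a, p) \<in> F" "(b, p) \<in> F" shows "a = b"
proof -
  obtain z where "preset F p = {z}" using tnetD(6)[OF assms(1,2)] by (auto simp: card_1_singleton_iff)
  then show ?thesis using assms(3,4) unfolding preset_def by (metis mem_Collect_eq singletonD)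
qed

lemma post_ex:
  assumes "tnet P T F" "p \<in> P" obtains v where "(p, v) \<in> F"
proof -
  obtain z where "postset F p = {z}" using tnetD(7)[OF assms(1,2)] by (auto simp: card_1_singleton_iff)
  then show ?thesis using that unfolding postset_def by blast
qed

lemma pre_ex:
  assumes "tnet P T F" "p \<in> P" obtains v where "(v, p) \<in> F"
proof -
  obtain z where "preset F p = {z}" using tnetD(6)[OF assms(1,2)] by (auto simp: card_1_singleton_iff)
  then show ?thesis using that unfolding preset_def by blast
qed

lemma edge_PT:
  assumes "tnet P T F" "(a, b) \<in> F"
  shows "(a \<in> P \<and> b \<in> T) \<or> (a \<in> T \<and> b \<in> P)"
  using tnetD(4)[OF assms(1)] assms(2) by auto

lemma edge_to_T:
  assumes "tnet P T F" "(a, b) \<in> F" "b \<in> T" shows "a \<in> P"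
  using edge_PT[OF assms(1,2)] tnetD(3)[OF assms(1)] assms(3) by auto

lemma edge_from_T:
  assumes "tnet P T F" "(a, b) \<in> F" "a \<in> T" shows "b \<in> P"
  using edge_PT[OF assms(1,2)] tnetD(3)[OF assms(1)] assms(3) by auto

lemma count_out:
  assumes tn: "tnet P T F" and c: "cw F w" and u: "u \<in> T"
  shows "(\<Sum>k<length w. if (w ! k, u) \<in> F then 1 else 0) = (\<Sum>k<length w. if w ! k = u then 1 else (0::nat))"
proof -
  have "(\<Sum>k<length w. if (w ! k, u) \<in> F then 1 else 0) = (\<Sum>k<length w. if w ! (Suc k mod length w) = u then 1 else (0::nat))"
  proof (intro sum.cong refl)
    fix k assume k: "k \<in> {..<length w}"
    have e: "(w ! k, w ! (Suc k mod length w)) \<in> F" using c k unfolding cw_def by auto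
    have "(w ! k, u) \<in> F \<longleftrightarrow> w ! (Suc k mod length w) = u"
    proof
      assume a: "(w ! k, u) \<in> F"
      have "w ! k \<in> P" by (rule edge_to_T[OF tn a u])
      then show "w ! (Suc k mod length w) = u" using post_unique[OF tn _ e a] by simp
    qed (use e in auto)
    then show "(if (w ! k, u) \<in> F then 1 else 0) = (if w ! (Suc k mod length w) = u then 1 else (0::nat))" by simp
  qed
  also have "\<dots> = (\<Sum>k<length w. if w ! k = u then 1 else (0::nat))"
    by (rule sum_shift[where g = "\<lambda>k. if w ! k = u then 1 else 0"])
  finally show ?thesis .
qed

lemma count_in:
  assumes tn: "tnet P T F" and c: "cw F w" and u: "u \<in> T"
  shows "(\<Sum>k<length w. if (u, w ! k) \<in> F then 1 else 0) = (\<Sum>k<length w. if w ! k = u then 1 else (0::nat))"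
proof -
  have "(\<Sum>k<length w. if (u, w ! k) \<in> F then 1 else 0) = (\<Sum>k<length w. if (u, w ! (Suc k mod length w)) \<in> F then 1 else (0::nat))"
    by (rule sum_shift[where g = "\<lambda>k. if (u, w ! k) \<in> F then 1 else 0", symmetric])
  also have "\<dots> = (\<Sum>k<length w. if w ! k = u then 1 else (0::nat))"
  proof (intro sum.cong refl)
    fix k assume k: "k \<in> {..<length w}"
    have e: "(w ! k, w ! (Suc k mod length w)) \<in> F" using c k unfolding cw_def by auto
    have "(u, w ! (Suc k mod length w)) \<in> F \<longleftrightarrow> w ! k = u"
    proof
      assume a: "(u, w ! (Suc k mod length w)) \<in> F"
      have "w ! (Suc k mod length w) \<in> P" by (rule edge_from_T[OF tn a u])
      then show "w ! k = u" using pre_unique[OF tn _ e a] by simp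
    qed (use e in auto)
    then show "(if (u, w ! (Suc k mod length w)) \<in> F then 1 else 0) = (if w ! k = u then 1 else (0::nat))" by simp
  qed
  finally show ?thesis .
qed

lemma sum_list_idx: "sum_list (map f w) = (\<Sum>k<length w. f (w ! k))"
  by (simp add: sum_list_sum_nth atLeast0LessThan)

lemma fire_inv:
  assumes tn: "tnet P T F" and c: "cw F w" and en: "enabled T F m u"
  shows "sum_list (map (fire F m u) w) = sum_list (map m w)"
proof -
  have u: "u \<in> T" using en unfolding enabled_def by auto
  let ?b = "\<lambda>k. if (w ! k, u) \<in> F then 1 else (0::nat)"
  let ?c = "\<lambda>k. if (u, w ! k) \<in> F then 1 else (0::nat)"
  have pw: "fire F m u (w ! k) + ?b k = m (w ! k) + ?c k" for k
  proof -
    have "(w ! k, u) \<in> F \<Longrightarrow> m (w ! k) \<ge> 1" using en unfolding enabled_def preset_def by auto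
    then show ?thesis unfolding fire_def by auto
  qed
  have "(\<Sum>k<length w. fire F m u (w ! k)) + (\<Sum>k<length w. ?b k) = (\<Sum>k<length w. m (w ! k)) + (\<Sum>k<length w. ?c k)"
    using pw by (simp add: sum.distrib[symmetric])
  moreover have "(\<Sum>k<length w. ?b k) = (\<Sum>k<length w. ?c k)"
    using count_out[OF tn c u] count_in[OF tn c u] by simp
  ultimately show ?thesis by (simp add: sum_list_idx)
qed

lemma reach_inv:
  assumes tn: "tnet P T F" and c: "cw F w" and r: "reach T F m m'"
  shows "sum_list (map m' w) = sum_list (map m w)"
  using r unfolding reach_def
proof (induction rule: rtranclp_induct)
  case (step y z)
  then obtain u where "enabled T F y u" "z = fire F y u" unfolding step_def by auto
  then show ?case using fire_inv[OF tn c] step.IH by simp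
qed simp

lemma proj:
  assumes pc0: "\<forall>y z. y \<in> U \<longrightarrow> (z, y) \<in> F \<longrightarrow> z \<in> U"
    and sU0: "\<forall>v. (s, v) \<in> F \<longrightarrow> v \<notin> U"
    and r: "reach T F m1 m2" and le: "\<forall>y\<in>U. m1 y \<le> nn y"
  shows "\<exists>n2. reach T F nn n2 \<and> (\<forall>y\<in>U. m2 y \<le> n2 y) \<and> nn s \<le> n2 s"
proof -
  have pc: "\<And>y z. y \<in> U \<Longrightarrow> (z, y) \<in> F \<Longrightarrow> z \<in> U" using pc0 by blast
  have sU: "\<And>v. (s, v) \<in> F \<Longrightarrow> v \<notin> U" using sU0 by blast
  show ?thesis using r unfolding reach_def
proof (induction rule: rtranclp_induct)
  case base
  then show ?case using le by auto
next
  case (step m2 m3)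
  obtain n2 where n2: "(step T F)\<^sup>*\<^sup>* nn n2" "\<forall>y\<in>U. m2 y \<le> n2 y" "nn s \<le> n2 s"
    using step.IH by blast
  obtain u where u: "enabled T F m2 u" "m3 = fire F m2 u" using step.hyps(2) unfolding step_def by auto
  show ?case
  proof (cases "u \<in> U")
    case True
    have en: "enabled T F n2 u"
      using u(1) n2(2) pc[OF True] unfolding enabled_def preset_def
      by (metis le_trans mem_Collect_eq)
    have "\<forall>y\<in>U. m3 y \<le> fire F n2 u y"
      using n2(2) u(2) unfolding fire_def by (auto intro: diff_le_mono)
    moreover have "nn s \<le> fire F n2 u s" using n2(3) sU[of u] True unfolding fire_def by auto
    moreover have "step T F n2 (fire F n2 u)" using en unfolding step_def by blast
    then have "(step T F)\<^sup>*\<^sup>* nn (fire F n2 u)"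
      using n2(1) by (meson rtranclp.rtrancl_into_rtrancl)
    ultimately show ?thesis by blast
  next
    case False
    have "\<forall>y\<in>U. m3 y \<le> n2 y"
    proof
      fix y assume y: "y \<in> U"
      have "(u, y) \<notin> F" using pc[OF y] False by blast
      then show "m3 y \<le> n2 y" using n2(2) y u(2) unfolding fire_def by auto
    qed
    then show ?thesis using n2 by blast
  qed
qed
qed

lemma reach_trans: "reach T F a b \<Longrightarrow> reach T F b c \<Longrightarrow> reach T F a c"
  unfolding reach_def by simp

lemma pump:
  assumes lv: "live T F \<mu>" and bd: "bounded P T F \<mu>"
    and pc: "\<And>y z. y \<in> U \<Longrightarrow> (z, y) \<in> F \<Longrightarrow> z \<in> U"
    and sU: "\<And>v. (s, v) \<in> F \<Longrightarrow> v \<notin> U"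
    and w: "w \<in> U" "w \<in> T" "(w, s) \<in> F" and sP: "s \<in> P"
  shows False
proof -
  have "\<exists>m. reach T F \<mu> m \<and> k \<le> m s" for k
  proof (induction k)
    case 0
    then show ?case by (auto simp: reach_def)
  next
    case (Suc k)
    then obtain m where m: "reach T F \<mu> m" "k \<le> m s" by blast
    obtain m2 where m2: "reach T F m m2" "enabled T F m2 w"
      using lv w(2) m(1) unfolding live_def by blast
    obtain n2 where n2: "reach T F m n2" "\<forall>y\<in>U. m2 y \<le> n2 y" "m s \<le> n2 s"
      using proj[of U F s T m m2 m] pc sU m2(1) by auto
    have en: "enabled T F n2 w"
      using m2(2) n2(2) pc[OF w(1)] unfolding enabled_def preset_def
      by (metis le_trans mem_Collect_eq)
    have "(s, w) \<notin> F" using sU w(1) by blast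
    then have "fire F n2 w s = n2 s + 1" using w(3) unfolding fire_def by simp
    moreover have "step T F n2 (fire F n2 w)" using en unfolding step_def by blast
    then have "reach T F \<mu> (fire F n2 w)"
      using reach_trans[OF m(1) n2(1)] unfolding reach_def
      by (meson rtranclp.rtrancl_into_rtrancl)
    ultimately show ?case using m(2) n2(3) by (intro exI[of _ "fire F n2 w"]) auto
  qed
  moreover obtain K where "\<forall>m. reach T F \<mu> m \<longrightarrow> (\<forall>p\<in>P. m p \<le> K)"
    using bd unfolding bounded_def by blast
  ultimately show False using sP by (meson Suc_n_not_le_n le_trans)
qed

lemma strongly_connected:
  assumes tn: "tnet P T F" and lv: "live T F \<mu>" and bd: "bounded P T F \<mu>"
    and x: "x \<in> P \<union> T" and y: "y \<in> P \<union> T"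
  shows "(y, x) \<in> F\<^sup>*"
proof (rule ccontr)
  assume ny: "(y, x) \<notin> F\<^sup>*"
  define U where "U = {z. (z, x) \<in> F\<^sup>*}"
  have pc: "\<And>y z. y \<in> U \<Longrightarrow> (z, y) \<in> F \<Longrightarrow> z \<in> U"
    unfolding U_def by (meson converse_rtrancl_into_rtrancl mem_Collect_eq)
  have "(x, y) \<in> (F \<union> F\<inverse>)\<^sup>*" using tnetD(5)[OF tn] x y by blast
  moreover have "x \<in> U" "y \<notin> U" using ny unfolding U_def by auto
  ultimately obtain a b where ab: "(a, b) \<in> F \<union> F\<inverse>" "a \<in> U" "b \<notin> U"
    by (rule crossing[of x y _ U, elim_format]) auto
  have abF: "(a, b) \<in> F" using ab pc by blast
  show False
  proof (cases "a \<in> T")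
    case True
    have bP: "b \<in> P" using edge_from_T[OF tn abF True] .
    show False
    proof (rule pump[where U=U and F=F and s=b and w=a, OF lv bd pc _ ab(2) True abF bP])
      fix v assume "(b, v) \<in> F" then show "v \<notin> U" using pc ab(3) by blast
    qed
  next
    case False
    then have aP: "a \<in> P" using edge_PT[OF tn abF] by blast
    obtain w where w: "(w, a) \<in> F" using pre_ex[OF tn aP] by blast
    have wT: "w \<in> T" using edge_PT[OF tn w] aP tnetD(3)[OF tn] by blast
    show False
    proof (rule pump[where U=U and F=F and s=a and w=w, OF lv bd pc _ pc[OF ab(2) w] wT w aP])
      fix v assume "(a, v) \<in> F" then show "v \<notin> U" using post_unique[OF tn aP _ abF] ab(3) by blast
    qed
  qed
qed

lemma cluster_char:
  assumes tn: "tnet P T F" and cl: "is_cluster P T F cl" and tcl: "tcl \<in> T" "tcl \<in> cl"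
  shows "mu_cl P cl x = (if (x, tcl) \<in> F then 1 else 0)"
proof -
  obtain x0 where x0: "x0 \<in> P \<union> T" "cl = cluster P T F x0" using cl unfolding is_cluster_def by blast
  have disj: "P \<inter> T = {}" using tnetD(3)[OF tn] .
  obtain t0 where t0: "t0 \<in> T" "x0 = t0 \<or> (x0, t0) \<in> F"
  proof (cases "x0 \<in> T")
    case True then show ?thesis using that by blast
  next
    case False
    then have "x0 \<in> P" using x0(1) by blast
    then obtain v where v: "(x0, v) \<in> F" using post_ex[OF tn] by blast
    then have "v \<in> T" using edge_PT[OF tn v] False by blast
    then show ?thesis using that v by blast
  qed
  have inv: "y = t0 \<or> (y, t0) \<in> F" if "y \<in> cluster P T F x0" for y
    using that
  proof (induction rule: cluster.induct)
    case base then show ?case using t0 by blast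
  next
    case (post p t)
    then have "p \<noteq> t0" using t0(1) disj by blast
    then have "(p, t0) \<in> F" using post.IH by blast
    then show ?case using post_unique[OF tn post.hyps(2) post.hyps(3)] by blast
  next
    case (pre t p)
    have "(t, t0) \<notin> F" using edge_from_T[OF tn _ pre.hyps(2)] t0(1) disj by blast
    then show ?case using pre.IH pre.hyps(3) by blast
  qed
  have "tcl = t0" using inv[of tcl] tcl x0(2) edge_from_T[OF tn _ tcl(1)] t0(1) disj by blast
  show ?thesis
  proof (cases "(x, tcl) \<in> F")
    case True
    then have "x \<in> P" using edge_to_T[OF tn _ tcl(1)] by blast
    moreover have "x \<in> cl" using cluster.pre[of tcl P T F x0 x] tcl True x0(2) by blast
    ultimately show ?thesis using True unfolding mu_cl_def by simp
  next
    case False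
    have "\<not> (x \<in> P \<and> x \<in> cl)"
    proof
      assume a: "x \<in> P \<and> x \<in> cl"
      then have "x \<noteq> t0" using t0(1) disj by blast
      then show False using inv[of x] a x0(2) False \<open>tcl = t0\<close> by blast
    qed
    then show ?thesis using False unfolding mu_cl_def by simp
  qed
qed

lemma mu_cl_walk:
  assumes tn: "tnet P T F" and cl: "is_cluster P T F cl" and tcl: "tcl \<in> T" "tcl \<in> cl"
    and c: "cw F w"
  shows "sum_list (map (mu_cl P cl) w) = sum_list (map (\<lambda>x. if x = tcl then 1 else 0) w)"
  using count_out[OF tn c tcl(1)] cluster_char[OF tn cl tcl]
  by (simp add: sum_list_idx)

lemma unmarked_inv:
  assumes z: "\<forall>s\<in>S. \<mu> s = 0"
    and cl: "\<forall>s\<in>S. \<forall>v. (v, s) \<in> F \<longrightarrow> (\<exists>s'\<in>S. (s', v) \<in> F)"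
    and r: "reach T F \<mu> \<mu>'"
  shows "\<forall>s\<in>S. \<mu>' s = 0"
  using r unfolding reach_def
proof (induction rule: rtranclp_induct)
  case base then show ?case using z by simp
next
  case (step y m)
  then obtain u where u: "enabled T F y u" "m = fire F y u" unfolding step_def by auto
  show ?case
  proof
    fix s assume s: "s \<in> S"
    have "(u, s) \<notin> F"
    proof
      assume "(u, s) \<in> F"
      then obtain s' where "s' \<in> S" "(s', u) \<in> F" using cl s by blast
      then show False using u(1) step.IH unfolding enabled_def preset_def by fastforce
    qed
    then show "m s = 0" using u(2) step.IH s unfolding fire_def by simp
  qed
qed

lemma ind_sum_notin: "a \<notin> set xs \<Longrightarrow> sum_list (map (\<lambda>x. if x = a then 1 else (0::nat)) xs) = 0"
  by (induction xs) auto

lemma ind_sum_distinct: "distinct xs \<Longrightarrow> sum_list (map (\<lambda>x. if x = a then 1 else (0::nat)) xs) \<le> 1"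
  by (induction xs) (auto simp: ind_sum_notin)

lemma ind_sum_hd: "distinct (a # xs) \<Longrightarrow> sum_list (map (\<lambda>x. if x = a then 1 else (0::nat)) (a # xs)) = 1"
  by (auto simp: ind_sum_notin)

lemma path_to_last:
  "successively (rel R) xs \<Longrightarrow> xs \<noteq> [] \<Longrightarrow> z \<in> set xs \<Longrightarrow> (z, last xs) \<in> R\<^sup>*"
proof (induction xs arbitrary: z)
  case (Cons a xs)
  show ?case
  proof (cases "xs = []")
    case True then show ?thesis using Cons by simp
  next
    case False
    have sx: "successively (rel R) xs" "(a, hd xs) \<in> R" using Cons.prems(1) False by (auto simp: successively_Cons)
    have "(hd xs, last xs) \<in> R\<^sup>*" using Cons.IH[OF sx(1) False, of "hd xs"] False by simp
    then have "(a, last xs) \<in> R\<^sup>*" using sx(2) by (meson converse_rtrancl_into_rtrancl)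
    then show ?thesis using Cons.prems(3) Cons.IH[OF sx(1) False] False by auto
  qed
qed simp

lemma lemmaA:
  assumes tsys: "tsystem P T F \<mu>" and X: "X \<subseteq> T" "t \<in> X" and q: "(q, t) \<in> F" "\<mu> q = 0"
    and E_def: "E = {(a, b). (a, b) \<in> F \<and> a \<notin> X \<and> b \<notin> X \<and> \<mu> a = 0 \<and> \<mu> b = 0}"
    and S_def: "S = {s. (s, q) \<in> E\<^sup>*} \<inter> P"
  shows "(\<exists>\<tau> \<delta>. (\<tau>, \<delta>) \<in> en_q T F \<mu> q t \<and> mnorm P \<mu> \<delta> = 0 \<and> set (butlast \<delta>) \<inter> X = {})
       \<or> (\<forall>s\<in>S. \<forall>v. (v, s) \<in> F \<longrightarrow> v \<in> X \<or> (\<exists>s'\<in>S. (s', v) \<in> F))"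
proof -
  have tn: "tnet P T F" and mk: "\<And>x. x \<notin> P \<Longrightarrow> \<mu> x = 0"
    using tsys unfolding tsystem_def marking_def by auto
  have disj: "P \<inter> T = {}" using tnetD(3)[OF tn] .
  have tT: "t \<in> T" using X by blast
  have qP: "q \<in> P" using edge_to_T[OF tn q(1) tT] .
  have qX: "q \<notin> X" using qP X(1) disj by blast
  have Sprop: "\<mu> z = 0 \<and> z \<notin> X" if "(z, q) \<in> E\<^sup>*" for z
    using that
  proof (cases rule: converse_rtranclE)
    case base then show ?thesis using q qX by simp
  next
    case (step c) then show ?thesis unfolding E_def by auto
  qed
  show ?thesis
  proof (cases "\<exists>\<tau>. (\<tau>, q) \<in> E\<^sup>* \<and> enabled T F \<mu> \<tau>")
    case True
    then obtain \<tau> where \<tau>: "(\<tau>, q) \<in> E\<^sup>*" "enabled T F \<mu> \<tau>" by blast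
    obtain \<rho> where \<rho>: "is_path E \<rho>" "distinct \<rho>" "hd \<rho> = \<tau>" "last \<rho> = q"
      using elem_path_from_rtrancl[OF \<tau>(1)] by blast
    have \<rho>ne: "\<rho> \<noteq> []" and \<rho>s: "successively (rel E) \<rho>" using \<rho>(1) by (auto simp: is_path_succ)
    have inS: "(z, q) \<in> E\<^sup>*" if "z \<in> set \<rho>" for z
      using path_to_last[OF \<rho>s \<rho>ne that] \<rho>(4) by simp
    have \<rho>F: "successively (rel F) \<rho>"
      using \<rho>s by (rule successively_mono) (auto simp: E_def)
    define \<delta> where "\<delta> = \<rho> @ [t]"
    have tn\<rho>: "t \<notin> set \<rho>" using inS Sprop X(2) by blast
    have ep: "elem_path F \<delta>"
      unfolding elem_path_def is_path_succ \<delta>_def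
      using \<rho>F \<rho>ne \<rho>(2,4) q(1) tn\<rho> by (auto simp: successively_append_iff)
    have len: "length \<delta> \<ge> 2" using \<rho>ne unfolding \<delta>_def by (cases \<rho>) auto
    have hd: "hd \<delta> = \<tau>" using \<rho>ne \<rho>(3) unfolding \<delta>_def by simp
    have nth: "\<delta> ! (length \<delta> - 2) = q"
      using \<rho>ne \<rho>(4) unfolding \<delta>_def by (simp add: nth_append last_conv_nth)
    have mn: "mnorm P \<mu> \<delta> = 0"
      unfolding mnorm_def
    proof (rule sum.neutral, rule ballI)
      fix z assume "z \<in> set \<delta> \<inter> P"
      then have "z \<in> set \<rho>" using tT disj unfolding \<delta>_def by auto
      then show "\<mu> z = 0" using inS Sprop by blast
    qed
    have bl: "set (butlast \<delta>) \<inter> X = {}" using inS Sprop unfolding \<delta>_def by auto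
    have "(\<tau>, \<delta>) \<in> en_q T F \<mu> q t"
      unfolding en_q_def en_def using \<tau>(2) ep len hd nth by (simp add: \<delta>_def)
    then show ?thesis using mn bl by blast
  next
    case False
    have "\<forall>s\<in>S. \<forall>v. (v, s) \<in> F \<longrightarrow> v \<in> X \<or> (\<exists>s'\<in>S. (s', v) \<in> F)"
    proof (intro ballI allI impI)
      fix s v assume s: "s \<in> S" and vs: "(v, s) \<in> F"
      show "v \<in> X \<or> (\<exists>s'\<in>S. (s', v) \<in> F)"
      proof (cases "v \<in> X")
        case vX: False
        have sP: "s \<in> P" and sq: "(s, q) \<in> E\<^sup>*" using s unfolding S_def by auto
        have vT: "v \<in> T" using edge_PT[OF tn vs] sP disj by blast
        have "\<mu> v = 0" using mk vT disj by blast
        then have "(v, s) \<in> E" using vs vX Sprop[OF sq] unfolding E_def by simp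
        then have vq: "(v, q) \<in> E\<^sup>*" using sq by (meson converse_rtrancl_into_rtrancl)
        then have "\<not> enabled T F \<mu> v" using False by blast
        then obtain s' where s': "(s', v) \<in> F" "\<mu> s' = 0" using vT unfolding enabled_def preset_def by force
        have s'P: "s' \<in> P" using edge_to_T[OF tn s'(1) vT] .
        have "s' \<notin> X" using s'P X(1) disj by blast
        then have "(s', v) \<in> E" using s' vX \<open>\<mu> v = 0\<close> unfolding E_def by simp
        then have "(s', q) \<in> E\<^sup>*" using vq by (meson converse_rtrancl_into_rtrancl)
        then have "s' \<in> S" using s'P unfolding S_def by simp
        then show ?thesis using s'(1) by blast
      qed simp
    qed
    then show ?thesis by blast
  qed
qed

lemma walk_eq:
  assumes tn: "tnet P T F" and cl: "is_cluster P T F cl" and tcl: "tcl \<in> T" "tcl \<in> cl"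
    and r: "reach T F \<mu> (mu_cl P cl)" and c: "cw F w"
  shows "sum_list (map \<mu> w) = sum_list (map (\<lambda>x. if x = tcl then 1 else 0) w)"
  using reach_inv[OF tn c r] mu_cl_walk[OF tn cl tcl c] by simp

lemma sum_list_ge_mem: "x \<in> set xs \<Longrightarrow> (f x :: nat) \<le> sum_list (map f xs)"
  by (induction xs) auto

lemma path_nodes:
  assumes tn: "tnet P T F" and "successively (rel F) xs" "length xs \<ge> 2" "z \<in> set xs"
  shows "z \<in> P \<union> T"
  using assms(2-4)
proof (induction xs rule: induct_list012)
  case (3 a b xs)
  have ab: "(a, b) \<in> F" using 3(3) by simp
  show ?case
  proof (cases "z = a")
    case True then show ?thesis using edge_PT[OF tn ab] by blast
  next
    case False
    then have z: "z \<in> set (b # xs)" using 3(5) by simp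
    show ?thesis
    proof (cases xs)
      case Nil then show ?thesis using z edge_PT[OF tn ab] by auto
    next
      case (Cons c ys) then show ?thesis using 3 z by auto
    qed
  qed
qed auto

lemma part1:
  assumes tsys: "tsystem P T F \<mu>" and tT: "t \<in> T" and r: "reach T F \<mu> \<mu>'" and en: "enabled T F \<mu>' t"
    and q: "q \<in> preset F t" "\<mu> q = 0"
  shows "\<exists>\<tau> \<delta>. (\<tau>, \<delta>) \<in> en_q T F \<mu> q t \<and> mnorm P \<mu> \<delta> = 0"
proof -
  define E where "E = {(a, b). (a, b) \<in> F \<and> a \<notin> {t} \<and> b \<notin> {t} \<and> \<mu> a = 0 \<and> \<mu> b = 0}"
  define S where "S = {s. (s, q) \<in> E\<^sup>*} \<inter> P"
  have qt: "(q, t) \<in> F" using q(1) unfolding preset_def by simp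
  have tn: "tnet P T F" using tsys unfolding tsystem_def by simp
  have qP: "q \<in> P" using edge_to_T[OF tn qt tT] .
  note A = lemmaA[OF tsys _ _ qt q(2) E_def S_def]
  show ?thesis
  proof (cases "\<exists>\<tau> \<delta>. (\<tau>, \<delta>) \<in> en_q T F \<mu> q t \<and> mnorm P \<mu> \<delta> = 0 \<and> set (butlast \<delta>) \<inter> {t} = {}")
    case True then show ?thesis by blast
  next
    case False
    then have H: "\<forall>s\<in>S. \<forall>v. (v, s) \<in> F \<longrightarrow> v \<in> {t} \<or> (\<exists>s'\<in>S. (s', v) \<in> F)"
      using A tT by blast
    have qS: "q \<in> S" using qP unfolding S_def by simp
    have z: "\<forall>s\<in>S. \<mu> s = 0"
    proof
      fix s assume "s \<in> S"
      then have "(s, q) \<in> E\<^sup>*" unfolding S_def by simp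
      then show "\<mu> s = 0" using q(2) by (cases rule: converse_rtranclE) (auto simp: E_def)
    qed
    have "\<forall>s\<in>S. \<forall>v. (v, s) \<in> F \<longrightarrow> (\<exists>s'\<in>S. (s', v) \<in> F)"
      using H qS qt by blast
    then have "\<mu>' q = 0" using unmarked_inv[OF z _ r] qS by blast
    then show ?thesis using en q(1) unfolding enabled_def by fastforce
  qed
qed

lemma part2ii:
  assumes tsys: "tsystem P T F \<mu>" and pp: "perpetual P T F \<mu> cl" and tcl: "tcl \<in> T" "tcl \<in> cl"
    and ep: "elem_path F \<delta>" and nd: "tcl \<notin> set \<delta>"
  shows "mnorm P \<mu> \<delta> \<le> 1"
proof (rule ccontr)
  assume "\<not> mnorm P \<mu> \<delta> \<le> 1"
  then have big: "mnorm P \<mu> \<delta> \<ge> 2" by simp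
  have tn: "tnet P T F" using tsys unfolding tsystem_def by simp
  have disj: "P \<inter> T = {}" using tnetD(3)[OF tn] .
  have clu: "is_cluster P T F cl" and lv: "live T F \<mu>" and bd: "bounded P T F \<mu>"
    and hm: "home_marking T F \<mu> (mu_cl P cl)" using pp unfolding perpetual_def by auto
  have rcl: "reach T F \<mu> (mu_cl P cl)" using hm unfolding home_marking_def reach_def by simp
  have SC: "(a, b) \<in> F\<^sup>*" if "a \<in> P \<union> T" "b \<in> P \<union> T" for a b
    using strongly_connected[OF tn lv bd that(2) that(1)] .
  have \<delta>ne: "\<delta> \<noteq> []" and \<delta>s: "successively (rel F) \<delta>" and \<delta>d: "distinct \<delta>"
    using ep unfolding elem_path_def is_path_succ by auto
  obtain p where p: "p \<in> set \<delta>" "p \<in> P"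
  proof -
    have "\<exists>a\<in>set \<delta> \<inter> P. \<mu> a \<noteq> 0"
    proof (rule ccontr)
      assume "\<not> (\<exists>a\<in>set \<delta> \<inter> P. \<mu> a \<noteq> 0)"
      then have "sum \<mu> (set \<delta> \<inter> P) = 0" by (intro sum.neutral) auto
      then show False using big unfolding mnorm_def by simp
    qed
    then show ?thesis using that by blast
  qed
  have nodes: "z \<in> P \<union> T" if "z \<in> set \<delta>" for z
  proof (cases "length \<delta> \<ge> 2")
    case True show ?thesis by (rule path_nodes[OF tn \<delta>s True that])
  next
    case False
    have "length \<delta> \<noteq> 0" using \<delta>ne by simp
    then have "length \<delta> = 1" using False by linarith
    then have "set \<delta> = {p}" using p(1) by (cases \<delta>) auto
    then show ?thesis using that p(2) by auto
  qed
  obtain p' where pp': "(p, p') \<in> F" using post_ex[OF tn p(2)] by blast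
  have p'T: "p' \<in> T" using edge_PT[OF tn pp'] p(2) disj by blast
  have pne: "p \<noteq> p'" using p(2) p'T disj by blast
  have other: "\<exists>z'\<in>P \<union> T. z' \<noteq> z" for z
  proof (cases "z = p")
    case True then show ?thesis using pne p'T by (intro bexI[of _ p']) auto
  next
    case False then show ?thesis using p(2) by (intro bexI[of _ p]) auto
  qed
  have pred: "\<exists>u. (u, z) \<in> F" if "z \<in> P \<union> T" for z
  proof -
    obtain z' where z': "z' \<in> P \<union> T" "z' \<noteq> z" using other by blast
    have "(z', z) \<in> F\<^sup>*" using SC[OF z'(1) that] .
    then show ?thesis using z'(2) by (cases rule: rtranclE) auto
  qed
  have succ: "\<exists>v. (z, v) \<in> F" if "z \<in> P \<union> T" for z
  proof -
    obtain z' where z': "z' \<in> P \<union> T" "z' \<noteq> z" using other by blast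
    have "(z, z') \<in> F\<^sup>*" using SC[OF that z'(1)] .
    then show ?thesis using z'(2) by (cases rule: converse_rtranclE) auto
  qed
  have "hd \<delta> \<in> P \<union> T" using nodes \<delta>ne hd_in_set by blast
  then obtain u where u: "(u, hd \<delta>) \<in> F" using pred by blast
  have "last \<delta> \<in> P \<union> T" using nodes \<delta>ne last_in_set by blast
  then obtain v where v: "(last \<delta>, v) \<in> F" using succ by blast
  have uv: "u \<in> P \<union> T" "v \<in> P \<union> T" using edge_PT[OF tn u] edge_PT[OF tn v] by blast+
  obtain \<rho> where \<rho>: "is_path F \<rho>" "distinct \<rho>" "hd \<rho> = v" "last \<rho> = u"
    using elem_path_from_rtrancl[OF SC[OF uv(2) uv(1)]] by blast
  have \<rho>ne: "\<rho> \<noteq> []" and \<rho>s: "successively (rel F) \<rho>" using \<rho>(1) by (auto simp: is_path_succ)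
  define w where "w = \<delta> @ \<rho>"
  have cw: "cw F w" unfolding w_def
  proof (rule cwI)
    show "successively (rel F) (\<delta> @ \<rho>)" using \<delta>s \<rho>s v \<rho>(3) by (simp add: successively_append_iff)
    show "(last (\<delta> @ \<rho>), hd (\<delta> @ \<rho>)) \<in> F" using u \<rho>(4) \<rho>ne \<delta>ne by simp
  qed (use \<delta>ne in simp)
  have "sum_list (map \<mu> w) = sum_list (map (\<lambda>x. if x = tcl then 1 else 0) w)"
    using walk_eq[OF tn clu tcl rcl cw] .
  also have "\<dots> \<le> 1"
    unfolding w_def map_append sum_list_append ind_sum_notin[OF nd]
    using ind_sum_distinct[OF \<rho>(2), of tcl] by simp
  finally have le1: "sum_list (map \<mu> w) \<le> 1" .
  have "mnorm P \<mu> \<delta> \<le> sum \<mu> (set \<delta>)" unfolding mnorm_def by (rule sum_mono2) auto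
  also have "\<dots> = sum_list (map \<mu> \<delta>)" using \<delta>d by (simp add: sum_list_distinct_conv_sum_set)
  also have "\<dots> \<le> sum_list (map \<mu> w)" unfolding w_def by simp
  finally show False using le1 big by simp
qed

lemma part2i:
  assumes tsys: "tsystem P T F \<mu>" and pp: "perpetual P T F \<mu> cl" and tcl: "tcl \<in> T" "tcl \<in> cl"
    and tT: "t \<in> T" and p: "p \<in> preset F t" "\<mu> p = 1" and q: "q \<in> preset F t" "\<mu> q = 0"
  shows "\<exists>\<tau> \<delta>. (\<tau>, \<delta>) \<in> en_q T F \<mu> q t \<and> mnorm P \<mu> \<delta> = 0 \<and> tcl \<notin> set (butlast \<delta>)"
proof -
  have tn: "tnet P T F" and mk: "\<And>x. x \<notin> P \<Longrightarrow> \<mu> x = 0"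
    using tsys unfolding tsystem_def marking_def by auto
  have disj: "P \<inter> T = {}" using tnetD(3)[OF tn] .
  have clu: "is_cluster P T F cl" and lv: "live T F \<mu>" and bd: "bounded P T F \<mu>"
    and hm: "home_marking T F \<mu> (mu_cl P cl)" using pp unfolding perpetual_def by auto
  have rcl: "reach T F \<mu> (mu_cl P cl)" using hm unfolding home_marking_def reach_def by simp
  have SC: "(a, b) \<in> F\<^sup>*" if "a \<in> P \<union> T" "b \<in> P \<union> T" for a b
    using strongly_connected[OF tn lv bd that(2) that(1)] .
  define X where "X = {t, tcl}"
  define E where "E = {(a, b). (a, b) \<in> F \<and> a \<notin> X \<and> b \<notin> X \<and> \<mu> a = 0 \<and> \<mu> b = 0}"
  define S where "S = {s. (s, q) \<in> E\<^sup>*} \<inter> P"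
  have qt: "(q, t) \<in> F" using q(1) unfolding preset_def by simp
  have pt: "(p, t) \<in> F" using p(1) unfolding preset_def by simp
  have qP: "q \<in> P" using edge_to_T[OF tn qt tT] .
  have pP: "p \<in> P" using edge_to_T[OF tn pt tT] .
  have XT: "X \<subseteq> T" "t \<in> X" using tT tcl unfolding X_def by auto
  have qX: "q \<notin> X" using qP XT disj by blast
  have Sprop: "\<mu> z = 0 \<and> z \<notin> X" if "(z, q) \<in> E\<^sup>*" for z
    using that
  proof (cases rule: converse_rtranclE)
    case base then show ?thesis using q qX by simp
  next
    case (step c) then show ?thesis unfolding E_def by auto
  qed
  note A = lemmaA[OF tsys XT qt q(2) E_def S_def]
  show ?thesis
  proof (cases "\<exists>\<tau> \<delta>. (\<tau>, \<delta>) \<in> en_q T F \<mu> q t \<and> mnorm P \<mu> \<delta> = 0 \<and> set (butlast \<delta>) \<inter> X = {}")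
    case True then show ?thesis unfolding X_def by blast
  next
    case False
    then have H: "\<forall>s\<in>S. \<forall>v. (v, s) \<in> F \<longrightarrow> v \<in> X \<or> (\<exists>s'\<in>S. (s', v) \<in> F)"
      using A by blast
    have qS: "q \<in> S" using qP unfolding S_def by simp
    show ?thesis
    proof (cases "tcl = t \<or> (\<forall>s\<in>S. (tcl, s) \<notin> F)")
      case True
      have z: "\<forall>s\<in>S. \<mu> s = 0" using Sprop unfolding S_def by blast
      have "\<forall>s\<in>S. \<forall>v. (v, s) \<in> F \<longrightarrow> (\<exists>s'\<in>S. (s', v) \<in> F)"
      proof (intro ballI allI impI)
        fix s v assume s: "s \<in> S" and vs: "(v, s) \<in> F"
        show "\<exists>s'\<in>S. (s', v) \<in> F"
        proof (cases "v \<in> X")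
          case True
          then have "v = t" using \<open>tcl = t \<or> (\<forall>s\<in>S. (tcl, s) \<notin> F)\<close> s vs unfolding X_def by auto
          then show ?thesis using qS qt by blast
        next
          case False then show ?thesis using H s vs by blast
        qed
      qed
      moreover obtain \<mu>'' where "reach T F \<mu> \<mu>''" "enabled T F \<mu>'' t"
        using lv tT unfolding live_def reach_def by blast
      ultimately have "\<mu>'' q = 0" "enabled T F \<mu>'' t" using unmarked_inv[OF z] qS by blast+
      then show ?thesis using q(1) unfolding enabled_def by fastforce
    next
      case False
      then have tne: "tcl \<noteq> t" by blast
      obtain s where s: "s \<in> S" "(tcl, s) \<in> F" using False by blast
      have sq: "(s, q) \<in> E\<^sup>*" using s(1) unfolding S_def by simp
      obtain \<sigma> where \<sigma>: "is_path E \<sigma>" "hd \<sigma> = s" "last \<sigma> = q"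
        using elem_path_from_rtrancl[OF sq] by blast
      have \<sigma>ne: "\<sigma> \<noteq> []" and \<sigma>s: "successively (rel E) \<sigma>" using \<sigma>(1) by (auto simp: is_path_succ)
      have \<sigma>F: "successively (rel F) \<sigma>"
        using \<sigma>s by (rule successively_mono) (auto simp: E_def)
      have \<sigma>z: "\<mu> z = 0 \<and> z \<notin> X" if "z \<in> set \<sigma>" for z
        using path_to_last[OF \<sigma>s \<sigma>ne that] \<sigma>(3) Sprop by simp
      have tcl\<sigma>: "tcl \<notin> set \<sigma>" using \<sigma>z unfolding X_def by blast
      have \<sigma>0: "sum_list (map \<mu> \<sigma>) = 0" using \<sigma>z by (simp add: sum_list_eq_0_iff)
      obtain \<gamma> where \<gamma>: "is_path F \<gamma>" "distinct \<gamma>" "hd \<gamma> = t" "last \<gamma> = tcl"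
        using elem_path_from_rtrancl[OF SC] tT tcl(1) by blast
      have \<gamma>ne: "\<gamma> \<noteq> []" and \<gamma>s: "successively (rel F) \<gamma>" using \<gamma>(1) by (auto simp: is_path_succ)
      define \<beta> where "\<beta> = butlast \<gamma>"
      have \<gamma>eq: "\<gamma> = \<beta> @ [tcl]" using \<gamma>ne \<gamma>(4) unfolding \<beta>_def by (metis append_butlast_last_id)
      have \<beta>ne: "\<beta> \<noteq> []" using \<gamma>eq \<gamma>(3) tne by (cases \<beta>) auto
      have \<beta>s: "successively (rel F) \<beta>" and \<beta>last: "(last \<beta>, tcl) \<in> F"
        using \<gamma>s \<beta>ne unfolding \<gamma>eq by (auto simp: successively_append_iff)
      have \<beta>hd: "hd \<beta> = t" using \<gamma>(3) \<beta>ne unfolding \<gamma>eq by simp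
      have tcl\<beta>: "tcl \<notin> set \<beta>" using \<gamma>(2) unfolding \<gamma>eq by simp
      define w1 where "w1 = (tcl # \<sigma>) @ \<beta>"
      have cw1: "cw F w1" unfolding w1_def
      proof (rule cwI)
        show "successively (rel F) ((tcl # \<sigma>) @ \<beta>)"
          using \<sigma>F \<beta>s \<sigma>ne \<beta>ne s(2) \<sigma>(2,3) \<beta>hd qt
          by (simp add: successively_append_iff successively_Cons)
        show "(last ((tcl # \<sigma>) @ \<beta>), hd ((tcl # \<sigma>) @ \<beta>)) \<in> F" using \<beta>last \<beta>ne by simp
      qed simp
      have "sum_list (map \<mu> w1) = sum_list (map (\<lambda>x. if x = tcl then 1 else 0) w1)"
        using walk_eq[OF tn clu tcl rcl cw1] .
      also have "\<dots> = 1"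
        unfolding w1_def map_append sum_list_append ind_sum_notin[OF tcl\<beta>]
        using ind_sum_notin[OF tcl\<sigma>] by simp
      finally have e1: "sum_list (map \<mu> w1) = 1" .
      have mt: "\<mu> tcl = 0" using mk[of tcl] tcl(1) disj by blast
      have "sum_list (map \<mu> w1) = \<mu> tcl + sum_list (map \<mu> \<sigma>) + sum_list (map \<mu> \<beta>)"
        unfolding w1_def by simp
      then have "sum_list (map \<mu> \<beta>) = 1" using e1 mt \<sigma>0 by linarith
      obtain \<gamma>' where \<gamma>': "is_path F \<gamma>'" "distinct \<gamma>'" "hd \<gamma>' = tcl" "last \<gamma>' = p"
        using elem_path_from_rtrancl[OF SC] tcl(1) pP by blast
      have \<gamma>'ne: "\<gamma>' \<noteq> []" and \<gamma>'s: "successively (rel F) \<gamma>'" using \<gamma>'(1) by (auto simp: is_path_succ)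
      define w2 where "w2 = \<gamma>' @ \<beta>"
      have cw2: "cw F w2" unfolding w2_def
      proof (rule cwI)
        show "successively (rel F) (\<gamma>' @ \<beta>)"
          using \<gamma>'s \<beta>s \<gamma>'(4) \<beta>hd pt by (simp add: successively_append_iff)
        show "(last (\<gamma>' @ \<beta>), hd (\<gamma>' @ \<beta>)) \<in> F" using \<beta>last \<beta>ne \<gamma>'ne \<gamma>'(3) by simp
      qed (use \<gamma>'ne in simp)
      have "sum_list (map \<mu> w2) = sum_list (map (\<lambda>x. if x = tcl then 1 else 0) w2)"
        using walk_eq[OF tn clu tcl rcl cw2] .
      also have "\<dots> \<le> 1"
        unfolding w2_def map_append sum_list_append ind_sum_notin[OF tcl\<beta>]
        using ind_sum_distinct[OF \<gamma>'(2), of tcl] by simp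
      finally have le1: "sum_list (map \<mu> w2) \<le> 1" .
      have "p \<in> set \<gamma>'" using \<gamma>'(4) \<gamma>'ne last_in_set by metis
      then have "\<mu> p \<le> sum_list (map \<mu> \<gamma>')" by (rule sum_list_ge_mem)
      then have "sum_list (map \<mu> w2) \<ge> 2"
        unfolding w2_def using \<open>sum_list (map \<mu> \<beta>) = 1\<close> p(2) by simp
      then show ?thesis using le1 by simp
    qed
  qed
qed

theorem proposition5p1:
  fixes P T :: "'n set" and F :: "('n \<times> 'n) set" and \<mu> :: "'n \<Rightarrow> nat"
  assumes "tsystem P T F \<mu>"
  shows "(\<forall>t q. t \<in> T \<and> (\<exists>\<mu>'. reach T F \<mu> \<mu>' \<and> enabled T F \<mu>' t) \<and>
             q \<in> preset F t \<and> \<mu> q = 0 \<longrightarrow>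
           (\<exists>\<tau> \<delta>. (\<tau>, \<delta>) \<in> en_q T F \<mu> q t \<and> mnorm P \<mu> \<delta> = 0))
       \<and> (\<forall>cl tcl. perpetual P T F \<mu> cl \<and> tcl \<in> T \<and> tcl \<in> cl \<longrightarrow>
           (\<forall>t p q. t \<in> T \<and> p \<in> preset F t \<and> \<mu> p = 1 \<and> q \<in> preset F t \<and> \<mu> q = 0 \<longrightarrow>
              (\<exists>\<tau> \<delta>. (\<tau>, \<delta>) \<in> en_q T F \<mu> q t \<and> mnorm P \<mu> \<delta> = 0 \<and>
                      tcl \<notin> set (butlast \<delta>)))
         \<and> (\<forall>\<delta>. elem_path F \<delta> \<and> tcl \<notin> set \<delta> \<longrightarrow> mnorm P \<mu> \<delta> \<le> 1))"
proof -
  show ?thesis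
  proof (intro conjI allI impI)
    fix t q
    assume h: "t \<in> T \<and> (\<exists>\<mu>'. reach T F \<mu> \<mu>' \<and> enabled T F \<mu>' t) \<and> q \<in> preset F t \<and> \<mu> q = 0"
    then obtain \<mu>' where "reach T F \<mu> \<mu>'" "enabled T F \<mu>' t" by blast
    then show "\<exists>\<tau> \<delta>. (\<tau>, \<delta>) \<in> en_q T F \<mu> q t \<and> mnorm P \<mu> \<delta> = 0"
      using part1[OF assms] h by blast
  next
    fix cl tcl t p q
    assume h1: "perpetual P T F \<mu> cl \<and> tcl \<in> T \<and> tcl \<in> cl"
      and h2: "t \<in> T \<and> p \<in> preset F t \<and> \<mu> p = 1 \<and> q \<in> preset F t \<and> \<mu> q = 0"
    then show "\<exists>\<tau> \<delta>. (\<tau>, \<delta>) \<in> en_q T F \<mu> q t \<and> mnorm P \<mu> \<delta> = 0 \<and> tcl \<notin> set (butlast \<delta>)"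
      using part2i[OF assms] by blast
  next
    fix cl tcl \<delta>
    assume h1: "perpetual P T F \<mu> cl \<and> tcl \<in> T \<and> tcl \<in> cl"
      and h2: "elem_path F \<delta> \<and> tcl \<notin> set \<delta>"
    then show "mnorm P \<mu> \<delta> \<le> 1" using part2ii[OF assms] by blast
  qed
qed

end
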